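(* Let $L>0$, $l\ge2$ an integer, and let real coefficients $a_{l+j,l-j},b_{l+j,l-j}$ ($j=1,\dots,l-1$) satisfy the Coefficient Conditions. Then there is a constant $M>0$ depending only on $l$ and these coefficients such that every $u\in C^{2l+1}([0,L])$ satisfying the Boundary Conditions obeys $$\sum_{j=1}^{l}(-1)^{j+1}(D^{2j+1}u,u)\ \ge\ M\Big(\sum_{i=1}^{l-1}\big[(D^iu(L))^2+(D^iu(0))^2\big]+(D^lu(0))^2\Big)\ \ge 0.$$
   Context: $D^i=\frac{d^i}{dx^i}$, $(f,g)=\int_0^L fg\,dx$. Boundary Conditions: $u(0)=u(L)=D^lu(L)=0$; $D^{l+j}u(0)=a_{l+j,l-j}D^{l-j}u(0)$ and $D^{l+j}u(L)=b_{l+j,l-j}D^{l-j}u(L)$ for $j=1,\dots,l-1$. Coefficient Conditions: - If $l=2$: $b_{3,1}>\tfrac12$ and $a_{3,1}<\tfrac12$. - If $l=3$: $b_{5,1}<-\tfrac12$, $b_{4,2}>\tfrac12$, $a_{5,1}>\tfrac12$, $a_{4,2}<\tfrac12$. - If $l\ge4$: $b_{l+1,l-1}>l-2$, $b_{l+2,l-2}<2-l$, $a_{l+1,l-1}<5-2l$, $a_{l+2,l-2}>2l-5$; for odd $j$ with $3\le j\le l-1$: $b_{l+j,l-j}>l-2+\frac12\big(\sum_{m=1}^{(j-1)/2}|b_{l+2m-1,l-2m+1}|\big)^2$ and $a_{l+j,l-j}<5-2l-\frac12\big(\sum_{m=1}^{(j-1)/2}|a_{l+2m-1,l-2m+1}|\big)^2$;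 for even $j$ with $4\le j\le l-1$: $b_{l+j,l-j}<2-l-\frac12\big(\sum_{m=1}^{j/2-1}|b_{l+2m,l-2m}|\big)^2$ and $a_{l+j,l-j}>2l-5+\frac12\big(\sum_{m=1}^{j/2-1}|a_{l+2m,l-2m}|\big)^2$. *)

theory Defs
  imports "HOL-Analysis.Analysis"
begin

text \<open>D k is the k-th derivative of u = D 0 on the closed interval [0,L]
  (one-sided at the endpoints); u is of class C^k on [0,L].\<close>
definition Ck_family :: "nat \<Rightarrow> real \<Rightarrow> (nat \<Rightarrow> real \<Rightarrow> real) \<Rightarrow> bool" where
  "Ck_family k L D \<longleftrightarrow>
     (\<forall>i<k. \<forall>x\<in>{0..L}. (D i has_real_derivative D (Suc i) x) (at x within {0..L}))
     \<and> continuous_on {0..L} (D k)"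

text \<open>Boundary conditions; a j stands for a_{l+j,l-j}, b j for b_{l+j,l-j}.\<close>
definition boundary_conds :: "nat \<Rightarrow> real \<Rightarrow> (nat \<Rightarrow> real) \<Rightarrow> (nat \<Rightarrow> real)
    \<Rightarrow> (nat \<Rightarrow> real \<Rightarrow> real) \<Rightarrow> bool" where
  "boundary_conds l L a b D \<longleftrightarrow>
     D 0 0 = 0 \<and> D 0 L = 0 \<and> D l L = 0 \<and>
     (\<forall>j\<in>{1..l-1}. D (l+j) 0 = a j * D (l-j) 0 \<and> D (l+j) L = b j * D (l-j) L)"

definition coeff_conds :: "nat \<Rightarrow> (nat \<Rightarrow> real) \<Rightarrow> (nat \<Rightarrow> real) \<Rightarrow> bool" where
  "coeff_conds l a b \<longleftrightarrow>
    (if l = 2 then b 1 > 1/2 \<and> a 1 < 1/2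
     else if l = 3 then b 2 < -1/2 \<and> b 1 > 1/2 \<and> a 2 > 1/2 \<and> a 1 < 1/2
     else
       b 1 > real l - 2 \<and> b 2 < 2 - real l \<and> a 1 < 5 - 2 * real l \<and> a 2 > 2 * real l - 5 \<and>
       (\<forall>j. odd j \<and> 3 \<le> j \<and> j \<le> l - 1 \<longrightarrow>
          b j > real l - 2 + (1/2) * (\<Sum>m=1..(j-1) div 2. \<bar>b (2*m-1)\<bar>)^2 \<and>
          a j < 5 - 2 * real l - (1/2) * (\<Sum>m=1..(j-1) div 2. \<bar>a (2*m-1)\<bar>)^2) \<and>
       (\<forall>j. even j \<and> 4 \<le> j \<and> j \<le> l - 1 \<longrightarrow>
          b j < 2 - real l - (1/2) * (\<Sum>m=1..j div 2 - 1. \<bar>b (2*m)\<bar>)^2 \<and>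
          a j > 2 * real l - 5 + (1/2) * (\<Sum>m=1..j div 2 - 1. \<bar>a (2*m)\<bar>)^2))"

end

theory Submission imports Defs begin


definition II :: "real \<Rightarrow> (nat \<Rightarrow> real \<Rightarrow> real) \<Rightarrow> nat \<Rightarrow> nat \<Rightarrow> real" where
  "II L D p q = integral {0..L} (\<lambda>x. D p x * D q x)"

definition BB :: "real \<Rightarrow> (nat \<Rightarrow> real \<Rightarrow> real) \<Rightarrow> nat \<Rightarrow> nat \<Rightarrow> real" where
  "BB L D p q = D p L * D q L - D p 0 * D q 0"

lemma Ck_cont:
  assumes "Ck_family N L D" "i \<le> N"
  shows "continuous_on {0..L} (D i)"
proof (cases "i = N")
  case True thus ?thesis using assms unfolding Ck_family_def by simp
next
  case False
  hence "i < N" using assms by simp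
  hence "\<forall>x\<in>{0..L}. (D i has_real_derivative D (Suc i) x) (at x within {0..L})"
    using assms unfolding Ck_family_def by blast
  thus ?thesis
    using DERIV_continuous continuous_on_eq_continuous_within by blast
qed

lemma ibp:
  assumes ck: "Ck_family N L D" and L: "0 \<le> L" and p: "p < N" and q: "q < N"
  shows "II L D (Suc p) q + II L D p (Suc q) = BB L D p q"
proof -
  have dp: "\<And>x. x\<in>{0..L} \<Longrightarrow> (D p has_real_derivative D (Suc p) x) (at x within {0..L})"
    using ck p unfolding Ck_family_def by blast
  have dq: "\<And>x. x\<in>{0..L} \<Longrightarrow> (D q has_real_derivative D (Suc q) x) (at x within {0..L})"
    using ck q unfolding Ck_family_def by blast
  have "((\<lambda>x. D (Suc p) x * D q x + D (Suc q) x * D p x) has_integral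
          (D p L * D q L - D p 0 * D q 0)) {0..L}"
    apply (rule fundamental_theorem_of_calculus[OF L, where f="\<lambda>x. D p x * D q x"])
    using DERIV_mult[OF dp dq] by (simp add: has_real_derivative_iff_has_vector_derivative)
  hence h: "integral {0..L} (\<lambda>x. D (Suc p) x * D q x + D (Suc q) x * D p x) = BB L D p q"
    unfolding BB_def by blast
  have c1: "continuous_on {0..L} (\<lambda>x. D (Suc p) x * D q x)"
    by (intro continuous_intros Ck_cont[OF ck]) (use p q in auto)
  have c2: "continuous_on {0..L} (\<lambda>x. D p x * D (Suc q) x)"
    by (intro continuous_intros Ck_cont[OF ck]) (use p q in auto)
  have i1: "(\<lambda>x. D (Suc p) x * D q x) integrable_on {0..L}"
    using c1 integrable_continuous_interval by blast
  have i2: "(\<lambda>x. D p x * D (Suc q) x) integrable_on {0..L}"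
    using c2 integrable_continuous_interval by blast
  have "integral {0..L} (\<lambda>x. D (Suc p) x * D q x + D (Suc q) x * D p x)
       = II L D (Suc p) q + II L D p (Suc q)"
    unfolding II_def using integral_add[OF i1 i2] by (simp add: mult.commute)
  thus ?thesis using h by simp
qed

lemma ibp_iter:
  assumes ck: "Ck_family N L D" and L: "0 \<le> L" and s: "s \<le> N" and t: "2 * t \<le> s"
  shows "II L D s 0 = (\<Sum>i<t. (-1)^i * BB L D (s - 1 - i) i) + (-1)^t * II L D (s - t) t"
  using t
proof (induction t)
  case 0 thus ?case by simp
next
  case (Suc t)
  have e: "II L D (Suc (s - Suc t)) t + II L D (s - Suc t) (Suc t) = BB L D (s - Suc t) t"
    by (rule ibp[OF ck L]) (use Suc.prems s in auto)
  have e2: "Suc (s - Suc t) = s - t" using Suc.prems by simp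
  have "II L D s 0 = (\<Sum>i<t. (-1)^i * BB L D (s - 1 - i) i) + (-1)^t * II L D (s - t) t"
    using Suc by simp
  also have "II L D (s - t) t = BB L D (s - Suc t) t - II L D (s - Suc t) (Suc t)"
    using e e2 by simp
  finally show ?case by (simp add: algebra_simps)
qed

lemma ibp_odd:
  assumes ck: "Ck_family N L D" and L: "0 \<le> L" and s: "2*j+1 \<le> N"
  shows "II L D (2*j+1) 0 = (\<Sum>i<j. (-1)^i * BB L D (2*j - i) i) + (-1)^j * BB L D j j / 2"
proof -
  have a: "II L D (2*j+1) 0 = (\<Sum>i<j. (-1)^i * BB L D (2*j+1 - 1 - i) i) + (-1)^j * II L D (2*j+1 - j) j"
    by (rule ibp_iter[OF ck L s]) simp
  have b: "II L D (Suc j) j + II L D j (Suc j) = BB L D j j"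
    by (rule ibp[OF ck L]) (use s in auto)
  have c: "II L D j (Suc j) = II L D (Suc j) j" unfolding II_def by (simp add: mult.commute)
  have d: "2*j+1-j = Suc j" by simp
  show ?thesis using a b c unfolding d by simp
qed




definition QF :: "nat \<Rightarrow> (nat \<Rightarrow> real) \<Rightarrow> real" where
  "QF l Z = (\<Sum>j=1..l. (-1)^(j+1) * ((\<Sum>i<j. (-1)^i * Z (2*j-i) * Z i) + (-1)^j * Z j ^ 2 / 2))"

lemma lhs_QF:
  assumes ck: "Ck_family (2*l+1) L D" and L: "0 \<le> L"
  shows "(\<Sum>j=1..l. (-1)^(j+1) * integral {0..L} (\<lambda>x. D (2*j+1) x * D 0 x))
       = QF l (\<lambda>p. D p L) - QF l (\<lambda>p. D p 0)"
proof -
  have "\<And>j. j \<in> {1..l} \<Longrightarrow> integral {0..L} (\<lambda>x. D (2*j+1) x * D 0 x)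
      = (\<Sum>i<j. (-1)^i * BB L D (2*j - i) i) + (-1)^j * BB L D j j / 2"
    using ibp_odd[OF ck L] unfolding II_def by simp
  hence "(\<Sum>j=1..l. (-1)^(j+1) * integral {0..L} (\<lambda>x. D (2*j+1) x * D 0 x))
     = (\<Sum>j=1..l. (-1)^(j+1) * ((\<Sum>i<j. (-1)^i * BB L D (2*j - i) i) + (-1)^j * BB L D j j / 2))"
    by simp
  also have "\<dots> = QF l (\<lambda>p. D p L) - QF l (\<lambda>p. D p 0)"
    unfolding QF_def sum_subtractf[symmetric]
  proof (rule sum.cong[OF refl])
    fix j
    have inner: "(\<Sum>i<j. (-1)^i * BB L D (2*j - i) i) = (\<Sum>i<j. (-1)^i * D (2*j-i) L * D i L)
       - (\<Sum>i<j. (-1)^i * D (2*j-i) 0 * D i 0)"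
      unfolding sum_subtractf[symmetric] BB_def by (simp add: right_diff_distrib mult.assoc)
    show "(-1)^(j+1) * ((\<Sum>i<j. (-1)^i * BB L D (2*j - i) i) + (-1)^j * BB L D j j / 2) =
       (-1)^(j+1) * ((\<Sum>i<j. (-1)^i * D (2*j-i) L * D i L) + (-1)^j * D j L ^ 2 / 2) -
       (-1)^(j+1) * ((\<Sum>i<j. (-1)^i * D (2*j-i) 0 * D i 0) + (-1)^j * D j 0 ^ 2 / 2)"
      unfolding inner BB_def by (simp add: algebra_simps power2_eq_square diff_divide_distrib sum_subtractf)
  qed
  finally show ?thesis .
qed

definition CC :: "nat \<Rightarrow> (nat \<Rightarrow> real) \<Rightarrow> real" where
  "CC l Z = (\<Sum>j\<in>{1..<l}. \<Sum>i\<in>{1..<l}. of_bool (i<j) * ((-1)^(j+1+i) * Z (2*j-i) * Z i))"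

lemma QF_split:
  assumes l: "l \<ge> 1" and Z0: "Z 0 = 0" and Zc: "\<And>k. k\<in>{1..l-1} \<Longrightarrow> Z (l+k) = c k * Z (l-k)"
  shows "QF l Z = (\<Sum>i\<in>{1..<l}. ((-1)^(l+1+i) * c (l-i) - 1/2) * Z i ^ 2) - Z l ^ 2 / 2 + CC l Z"
proof -
  define R where "R j = (\<Sum>i<j. (-1)^i * Z (2*j-i) * Z i)" for j
  have Q1: "QF l Z = (\<Sum>j=1..l. (-1)^(j+1) * R j) - (\<Sum>j=1..l. Z j ^ 2 / 2)"
    unfolding QF_def R_def sum_subtractf[symmetric]
    by (rule sum.cong[OF refl]) (simp add: algebra_simps power_add)
  have R1: "R j = (\<Sum>i\<in>{1..<j}. (-1)^i * Z (2*j-i) * Z i)" for j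
  proof -
    have "{..<j} = insert 0 {1..<j}" if "j > 0" using that by auto
    thus ?thesis unfolding R_def using Z0 by (cases "j = 0") (auto simp: sum.insert)
  qed
  have split: "{1..l} = insert l {1..<l}" using l by auto
  have "(\<Sum>j=1..l. (-1)^(j+1) * R j) = (-1)^(l+1) * R l + (\<Sum>j\<in>{1..<l}. (-1)^(j+1) * R j)"
    unfolding split by (simp add: sum.insert)
  also have "(-1)^(l+1) * R l = (\<Sum>i\<in>{1..<l}. (-1)^(l+1+i) * c (l-i) * Z i ^ 2)"
  proof -
    have "\<And>i. i\<in>{1..<l} \<Longrightarrow> Z (2*l-i) = c (l-i) * Z i"
    proof -
      fix i assume i: "i\<in>{1..<l}"
      have "Z (l + (l-i)) = c (l-i) * Z (l - (l-i))" by (rule Zc) (use i in auto)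
      moreover have "l + (l-i) = 2*l-i" "l-(l-i) = i" using i by auto
      ultimately show "Z (2*l-i) = c (l-i) * Z i" by simp
    qed
    thus ?thesis unfolding R1 by (simp add: sum_distrib_left power_add power2_eq_square algebra_simps)
  qed
  also have "(\<Sum>j\<in>{1..<l}. (-1)^(j+1) * R j) = CC l Z"
    unfolding CC_def R1
  proof (rule sum.cong[OF refl])
    fix j assume j: "j \<in> {1..<l}"
    have "(\<Sum>i\<in>{1..<l}. of_bool (i<j) * ((-1)^(j+1+i) * Z (2*j-i) * Z i))
        = (\<Sum>i\<in>{1..<j}. (-1)^(j+1+i) * Z (2*j-i) * Z i)"
      using j by (intro sum.mono_neutral_cong_right) auto
    thus "(-1)^(j+1) * (\<Sum>i\<in>{1..<j}. (-1)^i * Z (2*j-i) * Z i) =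
      (\<Sum>i\<in>{1..<l}. of_bool (i<j) * ((-1)^(j+1+i) * Z (2*j-i) * Z i))"
      by (simp add: sum_distrib_left power_add algebra_simps)
  qed
  finally have Q2: "(\<Sum>j=1..l. (-1)^(j+1) * R j) = (\<Sum>i\<in>{1..<l}. (-1)^(l+1+i) * c (l-i) * Z i ^ 2) + CC l Z" .
  have Q3: "(\<Sum>j=1..l. Z j ^ 2 / 2) = Z l ^ 2 / 2 + (\<Sum>i\<in>{1..<l}. Z i ^ 2 / 2)"
    unfolding split by (simp add: sum.insert)
  show ?thesis unfolding Q1 Q2 Q3
    by (simp add: algebra_simps sum_subtractf sum.distrib)
qed




definition qq :: "nat \<Rightarrow> nat \<Rightarrow> nat" where "qq l p = (if p \<le> l then p else 2*l - p)"
definition wt :: "nat \<Rightarrow> nat \<Rightarrow> real" where "wt l m = (if m = l then 1 / real l else 1)"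
definition VV :: "nat \<Rightarrow> real \<Rightarrow> (nat \<Rightarrow> real) \<Rightarrow> (nat \<Rightarrow> real) \<Rightarrow> nat \<Rightarrow> nat \<Rightarrow> real" where
  "VV l \<theta> c Z j i = (if 2*j-i < l then Z i ^ 2 else if 2*j-i = l then \<theta> * real l * Z i ^ 2
      else (c (2*j-i-l))^2 * Z i ^ 2)"

lemma amgm: "abs (u * v) \<le> u^2/2 + v^2/(2::real)"
proof -
  have "0 \<le> (abs u - abs v)^2" by simp
  thus ?thesis by (simp add: power2_eq_square algebra_simps abs_mult)
qed

lemma amgm2: assumes "t > 0" shows "abs (u * v) \<le> u^2/(2*t) + t * v^2/(2::real)"
proof -
  have "0 \<le> (abs u - t*abs v)^2" by simp
  hence "2*t*abs (u * v) \<le> u^2 + t^2 * v^2"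
    by (simp add: power2_eq_square algebra_simps abs_mult)
  hence "abs (u * v) \<le> (u^2 + t^2 * v^2)/(2*t)" using assms by (simp add: field_simps)
  also have "\<dots> = u^2/(2*t) + t * v^2/2" using assms by (simp add: field_simps power2_eq_square)
  finally show ?thesis .
qed

lemma term_bound:
  assumes Zc: "\<And>k. k\<in>{1..l-1} \<Longrightarrow> Z (l+k) = c k * Z (l-k)"
    and th: "\<theta> = 1 \<or> (\<theta> = 0 \<and> Z l = 0)"
    and ij: "1 \<le> i" "i < j" "j < l"
  shows "\<bar>Z (2*j-i) * Z i\<bar> \<le> wt l (qq l (2*j-i)) * Z (qq l (2*j-i)) ^ 2 / 2 + VV l \<theta> c Z j i / 2"
proof -
  consider "2*j-i < l" | "2*j-i = l" | "2*j-i > l" by linarith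
  thus ?thesis
  proof cases
    case 1 thus ?thesis using amgm[of "Z (2*j-i)" "Z i"] by (simp add: qq_def wt_def VV_def)
  next
    case 2
    have lpos: "real l > 0" using ij by simp
    show ?thesis using th
    proof
      assume "\<theta> = 1"
      thus ?thesis using 2 amgm2[OF lpos, of "Z l" "Z i"] by (simp add: qq_def wt_def VV_def)
    next
      assume "\<theta> = 0 \<and> Z l = 0"
      thus ?thesis using 2 by (simp add: qq_def wt_def VV_def)
    qed
  next
    case 3
    have k: "2*j-i-l \<in> {1..l-1}" using 3 ij by auto
    have "Z (l + (2*j-i-l)) = c (2*j-i-l) * Z (l - (2*j-i-l))" by (rule Zc[OF k])
    moreover have "l + (2*j-i-l) = 2*j-i" "l - (2*j-i-l) = 2*l-(2*j-i)" using 3 ij by auto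
    ultimately have e: "Z (2*j-i) = c (2*j-i-l) * Z (2*l-(2*j-i))" by simp
    have ne: "2*l-(2*j-i) \<noteq> l" using 3 ij by auto
    have "\<bar>Z (2*j-i) * Z i\<bar> = \<bar>Z (2*l-(2*j-i)) * (c (2*j-i-l) * Z i)\<bar>"
      unfolding e by (simp add: algebra_simps)
    also have "\<dots> \<le> Z (2*l-(2*j-i))^2/2 + (c (2*j-i-l) * Z i)^2/2" by (rule amgm)
    finally show ?thesis using 3 ne by (simp add: qq_def wt_def VV_def power_mult_distrib)
  qed
qed




lemma count1:
  assumes "a < 2*b"
  shows "real (card {j::nat. a < 2*j \<and> j < b}) \<le> (2*real b - real a - 1)/2"
proof -
  have "{j::nat. a < 2*j \<and> j < b} = {a div 2 + 1..<b}" by auto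
  hence "card {j::nat. a < 2*j \<and> j < b} = b - (a div 2 + 1)" by simp
  moreover have "a div 2 + 1 \<le> b" using assms by linarith
  moreover have "2 * (a div 2) \<ge> a - 1" by linarith
  ultimately show ?thesis
    by (simp add: of_nat_diff)
qed

lemma count2:
  assumes "i < (l::nat)"
  shows "real (card {j::nat. i < j \<and> 2*j < l + i}) \<le> (real l - real i)/2"
proof -
  have "{j::nat. i < j \<and> 2*j < l + i} = {i+1..<(l+i+1) div 2}" by auto
  hence "card {j::nat. i < j \<and> 2*j < l + i} = (l+i+1) div 2 - (i+1)" by simp
  moreover have "i + 1 \<le> (l+i+1) div 2" using assms by linarith
  moreover have "2 * ((l+i+1) div 2) \<le> l + i + 1" by linarith
  ultimately show ?thesis by (simp add: of_nat_diff)
qed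




definition NN :: "nat \<Rightarrow> nat \<Rightarrow> real" where
  "NN l m = (\<Sum>j\<in>{1..<l}. \<Sum>i\<in>{1..<l}. of_bool (i<j \<and> qq l (2*j-i) = m))"

lemma A_swap:
  fixes f :: "nat \<Rightarrow> real"
  shows "(\<Sum>j\<in>{1..<l}. \<Sum>i\<in>{1..<l}. of_bool (i<j) * f (qq l (2*j-i))) = (\<Sum>m\<in>{1..l}. f m * NN l m)"
proof -
  have pt: "of_bool (i<j) * f (qq l (2*j-i)) = (\<Sum>m\<in>{1..l}. of_bool (i<j \<and> qq l (2*j-i) = m) * f m)"
    if "j \<in> {1..<l}" "i \<in> {1..<l}" for j i
  proof (cases "i < j")
    case True
    have "qq l (2*j-i) \<in> {1..l}" using True that unfolding qq_def by auto
    hence "(\<Sum>m\<in>{1..l}. (if qq l (2*j-i) = m then f m else 0)) = f (qq l (2*j-i))"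
      by (simp add: sum.delta)
    moreover have "(\<Sum>m\<in>{1..l}. of_bool (i<j \<and> qq l (2*j-i) = m) * f m)
        = (\<Sum>m\<in>{1..l}. (if qq l (2*j-i) = m then f m else 0))"
      by (rule sum.cong) (use True in auto)
    ultimately show ?thesis using True by simp
  next
    case False thus ?thesis by simp
  qed
  have "(\<Sum>j\<in>{1..<l}. \<Sum>i\<in>{1..<l}. of_bool (i<j) * f (qq l (2*j-i)))
     = (\<Sum>j\<in>{1..<l}. \<Sum>i\<in>{1..<l}. \<Sum>m\<in>{1..l}. of_bool (i<j \<and> qq l (2*j-i) = m) * f m)"
    using pt by (intro sum.cong refl) auto
  also have "\<dots> = (\<Sum>j\<in>{1..<l}. \<Sum>m\<in>{1..l}. \<Sum>i\<in>{1..<l}. of_bool (i<j \<and> qq l (2*j-i) = m) * f m)"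
    by (rule sum.cong[OF refl], rule sum.swap)
  also have "\<dots> = (\<Sum>m\<in>{1..l}. \<Sum>j\<in>{1..<l}. \<Sum>i\<in>{1..<l}. of_bool (i<j \<and> qq l (2*j-i) = m) * f m)"
    by (rule sum.swap)
  also have "\<dots> = (\<Sum>m\<in>{1..l}. f m * NN l m)"
    unfolding NN_def by (simp only: sum_distrib_left sum_distrib_right mult.commute)
  finally show ?thesis .
qed

lemma card_single: "real (card {i::nat. i = e \<and> P}) = of_bool P"
  by (cases P) auto

lemma inner_lt:
  assumes m: "m < l" and j: "j < l"
  shows "(\<Sum>i\<in>{1..<l}. of_bool (i<j \<and> qq l (2*j-i) = m) :: real)
     \<le> of_bool (m < 2*j \<and> j < m) + of_bool (2*l - m < 2*j)"
proof -
  let ?S = "{1..<l} \<inter> {i. i<j \<and> qq l (2*j-i) = m}"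
  have sub: "?S \<subseteq> {i. i = 2*j-m \<and> (m < 2*j \<and> j < m)} \<union> {i. i = 2*j+m-2*l \<and> 2*l - m < 2*j}"
  proof
    fix i assume i: "i \<in> ?S"
    show "i \<in> {i. i = 2*j-m \<and> (m < 2*j \<and> j < m)} \<union> {i. i = 2*j+m-2*l \<and> 2*l - m < 2*j}"
    proof -
      have i1: "1 \<le> i" "i < j" and qe: "qq l (2*j-i) = m" using i by auto
      show ?thesis
      proof (cases "2*j-i \<le> l")
        case True
        hence "2*j-i = m" using qe unfolding qq_def by simp
        hence "i = 2*j-m \<and> (m < 2*j \<and> j < m)" using i1 by linarith
        thus ?thesis by simp
      next
        case False
        hence "2*l-(2*j-i) = m" using qe unfolding qq_def by simp
        hence "i = 2*j+m-2*l \<and> 2*l - m < 2*j" using i1 j False by linarith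
        thus ?thesis by simp
      qed
    qed
  qed
  have "real (card ?S) \<le> real (card ({i. i = 2*j-m \<and> (m < 2*j \<and> j < m)} \<union> {i. i = 2*j+m-2*l \<and> 2*l - m < 2*j}))"
    by (intro of_nat_mono card_mono sub) auto
  also have "\<dots> \<le> real (card {i. i = 2*j-m \<and> (m < 2*j \<and> j < m)}) + real (card {i. i = 2*j+m-2*l \<and> 2*l - m < 2*j})"
    using card_Un_le[of "{i. i = 2*j-m \<and> (m < 2*j \<and> j < m)}" "{i. i = 2*j+m-2*l \<and> 2*l - m < 2*j}"]
    by (simp only: of_nat_add[symmetric] of_nat_le_iff)
  finally show ?thesis unfolding card_single by simp
qed

lemma inner_eq:
  assumes j: "j < l"
  shows "(\<Sum>i\<in>{1..<l}. of_bool (i<j \<and> qq l (2*j-i) = l) :: real) \<le> of_bool (l < 2*j)"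
proof -
  let ?S = "{1..<l} \<inter> {i. i<j \<and> qq l (2*j-i) = l}"
  have sub: "?S \<subseteq> {i. i = 2*j-l \<and> l < 2*j}"
  proof
    fix i assume i: "i \<in> ?S"
    show "i \<in> {i. i = 2*j-l \<and> l < 2*j}"
    proof -
      have i1: "1 \<le> i" "i < j" and qe: "qq l (2*j-i) = l" using i by auto
      show ?thesis
      proof (cases "2*j-i \<le> l")
        case True
        hence "2*j-i = l" using qe unfolding qq_def by simp
        hence "i = 2*j-l \<and> l < 2*j" using i1 by linarith
        thus ?thesis by simp
      next
        case False
        hence "2*l-(2*j-i) = l" using qe unfolding qq_def by simp
        hence False using i1 j False by linarith
        thus ?thesis by simp
      qed
    qed
  qed
  have "real (card ?S) \<le> real (card {i. i = 2*j-l \<and> l < 2*j})"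
    by (intro of_nat_mono card_mono sub) auto
  thus ?thesis unfolding card_single by simp
qed

lemma NN_lt:
  assumes m: "m \<in> {1..<l}"
  shows "NN l m \<le> real m - 1"
proof -
  have "NN l m \<le> (\<Sum>j\<in>{1..<l}. of_bool (m < 2*j \<and> j < m) + of_bool (2*l - m < 2*j) :: real)"
    unfolding NN_def by (rule sum_mono) (use inner_lt m in auto)
  also have "\<dots> = real (card ({1..<l} \<inter> {j. m < 2*j \<and> j < m})) + real (card ({1..<l} \<inter> {j. 2*l - m < 2*j}))"
    by (simp add: sum.distrib)
  also have "\<dots> \<le> real (card {j. m < 2*j \<and> j < m}) + real (card {j. 2*l - m < 2*j \<and> j < l})"
  proof -
    have "real (card ({1..<l} \<inter> {j. m < 2*j \<and> j < m})) \<le> real (card {j. m < 2*j \<and> j < m})"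
      by (intro of_nat_mono card_mono) auto
    moreover have "{1..<l} \<inter> {j. 2*l - m < 2*j} = {j. 2*l - m < 2*j \<and> j < l}" using m by auto
    ultimately show ?thesis by simp
  qed
  also have "\<dots> \<le> (2*real m - real m - 1)/2 + (2*real l - real (2*l-m) - 1)/2"
    by (intro add_mono count1) (use m in auto)
  also have "\<dots> = real m - 1" using m by (simp add: of_nat_diff)
  finally show ?thesis .
qed

lemma NN_l:
  assumes "l \<ge> 1"
  shows "NN l l \<le> (real l - 1)/2"
proof -
  have "NN l l \<le> (\<Sum>j\<in>{1..<l}. of_bool (l < 2*j) :: real)"
    unfolding NN_def by (rule sum_mono) (use inner_eq in auto)
  also have "\<dots> = real (card ({1..<l} \<inter> {j. l < 2*j}))" by simp
  also have "{1..<l} \<inter> {j. l < 2*j} = {j. l < 2*j \<and> j < l}" by auto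
  also have "real (card {j. l < 2*j \<and> j < l}) \<le> (2*real l - real l - 1)/2"
    by (rule count1) (use assms in auto)
  finally show ?thesis by simp
qed


definition BS :: "nat \<Rightarrow> nat set" where "BS K = {k\<in>{1..<K}. even (K-k)}"
definition SS :: "(nat \<Rightarrow> real) \<Rightarrow> nat \<Rightarrow> real" where "SS c K = (\<Sum>k\<in>BS K. \<bar>c k\<bar>)"

lemma sq_sum: "finite A \<Longrightarrow> (\<Sum>k\<in>A. (f k)^2) \<le> (\<Sum>k\<in>A. \<bar>f k\<bar>)^2" for f :: "nat \<Rightarrow> real"
proof (induction A rule: finite_induct)
  case empty thus ?case by simp
next
  case (insert x F)
  have "0 \<le> (\<Sum>k\<in>F. \<bar>f k\<bar>)" by (simp add: sum_nonneg)
  hence "(f x)^2 + (\<Sum>k\<in>F. \<bar>f k\<bar>)^2 \<le> (\<bar>f x\<bar> + (\<Sum>k\<in>F. \<bar>f k\<bar>))^2"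
    by (simp add: power2_eq_square algebra_simps)
  thus ?case using insert by simp
qed

definition vco :: "nat \<Rightarrow> real \<Rightarrow> (nat \<Rightarrow> real) \<Rightarrow> nat \<Rightarrow> nat \<Rightarrow> real" where
  "vco l \<theta> c j i = (if 2*j-i < l then 1 else if 2*j-i = l then \<theta> * real l else (c (2*j-i-l))^2)"

lemma VV_vco: "VV l \<theta> c Z j i = vco l \<theta> c j i * Z i ^ 2"
  unfolding VV_def vco_def by simp

lemma part3:
  assumes i: "i < l"
  shows "(\<Sum>j\<in>{1..<l}. of_bool (l+i < 2*j) * (c (2*j-i-l))^2) \<le> (SS c (l-i))^2"
proof -
  let ?J = "{1..<l} \<inter> {j. l+i < 2*j}"
  let ?g = "\<lambda>j. 2*j-i-l"
  have "(\<Sum>j\<in>{1..<l}. of_bool (l+i < 2*j) * (c (2*j-i-l))^2) = (\<Sum>j\<in>?J. (c (?g j))^2)"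
    by simp
  also have "inj_on ?g ?J" by (rule inj_onI) auto
  hence "(\<Sum>j\<in>?J. (c (?g j))^2) = (\<Sum>k\<in>?g ` ?J. (c k)^2)"
    by (simp add: sum.reindex)
  also have "\<dots> \<le> (\<Sum>k\<in>BS (l-i). (c k)^2)"
  proof (rule sum_mono2)
    show "finite (BS (l-i))" unfolding BS_def by simp
    show "?g ` ?J \<subseteq> BS (l-i)"
    proof
      fix k assume "k \<in> ?g ` ?J"
      then obtain j where j: "j \<in> ?J" "k = ?g j" by blast
      have "k \<ge> 1" "k < l - i" using j i by auto
      moreover have "l - i - k = 2*(l-j)" using j i by auto
      hence "even (l - i - k)" by simp
      ultimately show "k \<in> BS (l-i)" unfolding BS_def by simp
    qed
  qed auto
  also have "\<dots> \<le> (SS c (l-i))^2" unfolding SS_def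
    by (rule sq_sum) (simp add: BS_def)
  finally show ?thesis .
qed

lemma V_inner:
  assumes i: "i \<in> {1..<l}" and th: "\<theta> \<ge> 0"
  shows "(\<Sum>j\<in>{1..<l}. of_bool (i<j) * vco l \<theta> c j i) \<le> (real l - real i)/2 + \<theta> * real l + (SS c (l-i))^2"
proof -
  have "(\<Sum>j\<in>{1..<l}. of_bool (i<j) * vco l \<theta> c j i) \<le>
     (\<Sum>j\<in>{1..<l}. of_bool (i<j \<and> 2*j < l+i) + \<theta> * real l * of_bool (2*j = l+i) + of_bool (l+i < 2*j) * (c (2*j-i-l))^2)"
  proof (rule sum_mono)
    fix j assume j: "j \<in> {1..<l}"
    consider "2*j < l+i" | "2*j = l+i" | "l+i < 2*j" by linarith
    thus "of_bool (i<j) * vco l \<theta> c j i \<le> of_bool (i<j \<and> 2*j < l+i) + \<theta> * real l * of_bool (2*j = l+i) + of_bool (l+i < 2*j) * (c (2*j-i-l))^2"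
    proof cases
      case 1 thus ?thesis using th i unfolding vco_def by auto
    next
      case 2 thus ?thesis using th i unfolding vco_def by auto
    next
      case 3
      hence "i < j" "\<not> 2*j-i < l" "2*j-i \<noteq> l" using i by auto
      thus ?thesis using 3 th unfolding vco_def by simp
    qed
  qed
  also have "\<dots> = (\<Sum>j\<in>{1..<l}. of_bool (i<j \<and> 2*j < l+i)) + \<theta> * real l * (\<Sum>j\<in>{1..<l}. of_bool (2*j = l+i))
        + (\<Sum>j\<in>{1..<l}. of_bool (l+i < 2*j) * (c (2*j-i-l))^2)"
    by (simp only: sum.distrib sum_distrib_left)
  also have "\<dots> \<le> (real l - real i)/2 + \<theta> * real l * 1 + (SS c (l-i))^2"
  proof (intro add_mono mult_left_mono)
    have fin: "finite {j. i<j \<and> 2*j < l+i}" by (rule finite_subset[of _ "{..<l+i}"]) auto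
    have "real (card ({1..<l} \<inter> {j. i<j \<and> 2*j < l+i})) \<le> real (card {j. i<j \<and> 2*j < l+i})"
      by (intro of_nat_mono card_mono fin) auto
    also have "\<dots> \<le> (real l - real i)/2" by (rule count2) (use i in auto)
    finally show "(\<Sum>j\<in>{1..<l}. of_bool (i<j \<and> 2*j < l+i)) \<le> (real l - real i)/2" by simp
    have "card ({1..<l} \<inter> {j. 2*j = l+i}) \<le> card {(l+i) div 2}"
      by (rule card_mono) auto
    thus "(\<Sum>j\<in>{1..<l}. of_bool (2*j = l+i)) \<le> (1::real)" by simp
    show "(\<Sum>j\<in>{1..<l}. of_bool (l+i < 2*j) * (c (2*j-i-l))^2) \<le> (SS c (l-i))^2"
      by (rule part3) (use i in auto)
    show "0 \<le> \<theta> * real l" using th by simp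
  qed
  finally show ?thesis by simp
qed


lemma CC_bound:
  assumes l: "l \<ge> 2" and Zc: "\<And>k. k\<in>{1..l-1} \<Longrightarrow> Z (l+k) = c k * Z (l-k)"
    and th: "\<theta> = 1 \<or> (\<theta> = 0 \<and> Z l = 0)"
  shows "\<bar>CC l Z\<bar> \<le> (\<Sum>i\<in>{1..<l}. ((real i - 1)/2 + (real l - real i)/4 + \<theta>*real l/2 + (SS c (l-i))^2/2) * Z i^2) + Z l^2/4"
proof -
  define F where "F m = wt l m * Z m ^ 2" for m
  have th0: "\<theta> \<ge> 0" using th by auto
  have "\<bar>CC l Z\<bar> \<le> (\<Sum>j\<in>{1..<l}. \<bar>\<Sum>i\<in>{1..<l}. of_bool (i<j) * ((-1)^(j+1+i) * Z (2*j-i) * Z i)\<bar>)"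
    unfolding CC_def by (rule sum_abs)
  also have "\<dots> \<le> (\<Sum>j\<in>{1..<l}. \<Sum>i\<in>{1..<l}. \<bar>of_bool (i<j) * ((-1)^(j+1+i) * Z (2*j-i) * Z i)\<bar>)"
    by (intro sum_mono sum_abs)
  also have "\<dots> \<le> (\<Sum>j\<in>{1..<l}. \<Sum>i\<in>{1..<l}. of_bool (i<j) * (F (qq l (2*j-i)) / 2 + VV l \<theta> c Z j i / 2))"
  proof (intro sum_mono)
    fix j i assume j: "j \<in> {1..<l}" and i: "i \<in> {1..<l}"
    show "\<bar>of_bool (i<j) * ((-1)^(j+1+i) * Z (2*j-i) * Z i)\<bar> \<le> of_bool (i<j) * (F (qq l (2*j-i)) / 2 + VV l \<theta> c Z j i / 2)"
    proof (cases "i < j")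
      case True
      have "\<bar>Z (2*j-i) * Z i\<bar> \<le> F (qq l (2*j-i)) / 2 + VV l \<theta> c Z j i / 2"
        unfolding F_def by (rule term_bound[OF Zc th]) (use i j True in auto)
      thus ?thesis using True by (simp add: abs_mult)
    qed simp
  qed
  also have "\<dots> = (\<Sum>j\<in>{1..<l}. \<Sum>i\<in>{1..<l}. of_bool (i<j) * F (qq l (2*j-i))) / 2
       + (\<Sum>j\<in>{1..<l}. \<Sum>i\<in>{1..<l}. of_bool (i<j) * VV l \<theta> c Z j i) / 2"
    by (simp del: sum_of_bool_mult_eq sum_mult_of_bool_eq add: sum.distrib sum_divide_distrib algebra_simps)
  also have "(\<Sum>j\<in>{1..<l}. \<Sum>i\<in>{1..<l}. of_bool (i<j) * F (qq l (2*j-i))) = (\<Sum>m\<in>{1..l}. F m * NN l m)"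
    by (rule A_swap)
  also have "(\<Sum>m\<in>{1..l}. F m * NN l m) \<le> (\<Sum>i\<in>{1..<l}. (real i - 1) * Z i ^ 2) + Z l ^ 2 / 2"
  proof -
    have sp: "{1..l} = insert l {1..<l}" using l by auto
    have "(\<Sum>m\<in>{1..l}. F m * NN l m) = F l * NN l l + (\<Sum>m\<in>{1..<l}. F m * NN l m)"
      unfolding sp by (simp add: sum.insert)
    also have "F l * NN l l \<le> Z l ^ 2 / 2"
    proof -
      have "F l * NN l l \<le> Z l ^ 2 / real l * ((real l - 1)/2)"
      proof -
        have "F l = Z l ^ 2 / real l" unfolding F_def wt_def by simp
        moreover have "NN l l \<le> (real l - 1)/2" using NN_l[of l] l by simp
        moreover have "0 \<le> Z l ^ 2 / real l" by simp
        ultimately show ?thesis using mult_left_mono[of "NN l l" "(real l - 1)/2" "Z l ^ 2 / real l"] by simp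
      qed
      also have "\<dots> \<le> Z l ^ 2 / 2" using l by (simp add: field_simps)
      finally show ?thesis .
    qed
    also have "(\<Sum>m\<in>{1..<l}. F m * NN l m) \<le> (\<Sum>i\<in>{1..<l}. (real i - 1) * Z i ^ 2)"
    proof (rule sum_mono)
      fix m assume m: "m \<in> {1..<l}"
      hence "F m = Z m ^ 2" unfolding F_def wt_def by simp
      thus "F m * NN l m \<le> (real m - 1) * Z m ^ 2"
        using mult_right_mono[OF NN_lt[OF m], of "Z m ^ 2"] by (simp add: mult.commute)
    qed
    finally show ?thesis by simp
  qed
  also have "(\<Sum>j\<in>{1..<l}. \<Sum>i\<in>{1..<l}. of_bool (i<j) * VV l \<theta> c Z j i)
      = (\<Sum>i\<in>{1..<l}. Z i ^ 2 * (\<Sum>j\<in>{1..<l}. of_bool (i<j) * vco l \<theta> c j i))"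
    unfolding VV_vco by (subst sum.swap) (simp add: sum_distrib_left algebra_simps)
  also have "\<dots> \<le> (\<Sum>i\<in>{1..<l}. Z i ^ 2 * ((real l - real i)/2 + \<theta> * real l + (SS c (l-i))^2))"
    by (intro sum_mono mult_left_mono V_inner th0) auto
  finally have "\<bar>CC l Z\<bar> \<le> ((\<Sum>i\<in>{1..<l}. (real i - 1) * Z i ^ 2) + Z l ^ 2 / 2) / 2
     + (\<Sum>i\<in>{1..<l}. Z i ^ 2 * ((real l - real i)/2 + \<theta> * real l + (SS c (l-i))^2)) / 2"
    by simp
  also have "\<dots> = (\<Sum>i\<in>{1..<l}. ((real i - 1)/2 + (real l - real i)/4 + \<theta>*real l/2 + (SS c (l-i))^2/2) * Z i^2) + Z l^2/4"
    by (simp add: sum_divide_distrib sum.distrib[symmetric] algebra_simps add_divide_distrib)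
  finally show ?thesis .
qed




lemma BS_odd:
  assumes "odd k" shows "BS k = (\<lambda>m. 2*m-1) ` {1..(k-1) div 2}"
proof
  show "BS k \<subseteq> (\<lambda>m. 2*m-1) ` {1..(k-1) div 2}"
  proof
    fix x assume x: "x \<in> BS k"
    hence x1: "1 \<le> x" "x < k" "even (k-x)" unfolding BS_def by auto
    hence "odd x" using assms by (metis dvd_diff_nat le_add_diff_inverse less_or_eq_imp_le odd_add)
    then obtain m where m: "x = 2*m+1" by (metis oddE)
    have "x = 2*(m+1) - 1" "m+1 \<in> {1..(k-1) div 2}" using m x1 assms by (auto elim!: oddE)
    thus "x \<in> (\<lambda>m. 2*m-1) ` {1..(k-1) div 2}" by blast
  qed
next
  show "(\<lambda>m. 2*m-1) ` {1..(k-1) div 2} \<subseteq> BS k"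
  proof
    fix x assume "x \<in> (\<lambda>m. 2*m-1) ` {1..(k-1) div 2}"
    then obtain m where m: "m \<in> {1..(k-1) div 2}" "x = 2*m-1" by blast
    obtain r where r: "k = 2*r+1" using assms by (metis oddE)
    have kx: "k - x = 2*(r - m + 1)" using m r by auto
    have e: "even (k-x)" unfolding kx by simp
    have "1 \<le> x" "x < k" using m r by auto
    thus "x \<in> BS k" unfolding BS_def using e by (simp only: mem_Collect_eq atLeastLessThan_iff)
  qed
qed

lemma BS_even:
  assumes "even k" shows "BS k = (\<lambda>m. 2*m) ` {1..k div 2 - 1}"
proof
  show "BS k \<subseteq> (\<lambda>m. 2*m) ` {1..k div 2 - 1}"
  proof
    fix x assume x: "x \<in> BS k"
    hence x1: "1 \<le> x" "x < k" "even (k-x)" unfolding BS_def by auto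
    hence "even x" using assms by (metis dvd_diff_nat le_add_diff_inverse less_or_eq_imp_le even_add)
    then obtain m where m: "x = 2*m" by (metis evenE)
    have "m \<in> {1..k div 2 - 1}" using m x1 assms by (auto elim!: evenE)
    thus "x \<in> (\<lambda>m. 2*m) ` {1..k div 2 - 1}" using m by blast
  qed
next
  show "(\<lambda>m. 2*m) ` {1..k div 2 - 1} \<subseteq> BS k"
  proof
    fix x assume "x \<in> (\<lambda>m. 2*m) ` {1..k div 2 - 1}"
    then obtain m where m: "m \<in> {1..k div 2 - 1}" "x = 2*m" by blast
    obtain r where r: "k = 2*r" using assms by (metis evenE)
    have kx: "k - x = 2*(r - m)" using m r by auto
    have e: "even (k-x)" unfolding kx by simp
    have "1 \<le> x" "x < k" using m r by auto
    thus "x \<in> BS k" unfolding BS_def using e by (simp only: mem_Collect_eq atLeastLessThan_iff)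
  qed
qed

lemma SS_odd: "odd k \<Longrightarrow> SS c k = (\<Sum>m=1..(k-1) div 2. \<bar>c (2*m-1)\<bar>)"
  unfolding SS_def BS_odd by (subst sum.reindex) (auto intro: inj_onI)

lemma SS_even: "even k \<Longrightarrow> SS c k = (\<Sum>m=1..k div 2 - 1. \<bar>c (2*m)\<bar>)"
  unfolding SS_def BS_even by (subst sum.reindex) (auto intro: inj_onI)

lemma BS_small: "k \<le> 2 \<Longrightarrow> BS k = {}"
proof -
  assume k: "k \<le> 2"
  { fix x assume x: "x \<in> BS k"
    hence "1 \<le> x" "x < k" "even (k-x)" unfolding BS_def by auto
    moreover have "k - x = 1" using k \<open>1 \<le> x\<close> \<open>x < k\<close> by linarith
    ultimately have False by simp }
  thus ?thesis by blast
qed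

lemma SS_small: "k \<le> 2 \<Longrightarrow> SS c k = 0"
  unfolding SS_def using BS_small by simp

lemma cond_b:
  assumes cc: "coeff_conds l a b" and l: "l \<ge> 4" and k: "k \<in> {1..l-1}"
  shows "(-1)^(k+1) * b k > real l - 2 + (SS b k)^2/2"
proof -
  have C: "b 1 > real l - 2" "b 2 < 2 - real l"
    "\<And>j. odd j \<and> 3 \<le> j \<and> j \<le> l - 1 \<Longrightarrow> b j > real l - 2 + (1/2) * (\<Sum>m=1..(j-1) div 2. \<bar>b (2*m-1)\<bar>)^2"
    "\<And>j. even j \<and> 4 \<le> j \<and> j \<le> l - 1 \<Longrightarrow> b j < 2 - real l - (1/2) * (\<Sum>m=1..j div 2 - 1. \<bar>b (2*m)\<bar>)^2"
    using cc l unfolding coeff_conds_def by auto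
  have "k = 1 \<or> k = 2 \<or> (odd k \<and> k \<ge> 3) \<or> (even k \<and> k \<ge> 4)"
  proof -
    have k1: "k \<ge> 1" using k by simp
    show ?thesis
    proof (cases "k \<le> 2")
      case True thus ?thesis using k1 by linarith
    next
      case False
      moreover have "k \<noteq> 3 \<or> odd k" by auto
      ultimately show ?thesis by (cases "odd k") auto
    qed
  qed
  then consider "k = 1" | "k = 2" | "odd k" "k \<ge> 3" | "even k" "k \<ge> 4" by blast
  thus ?thesis
  proof cases
    case 1 thus ?thesis using C SS_small by simp
  next
    case 2 thus ?thesis using C SS_small by simp
  next
    case 3 thus ?thesis using C(3)[of k] k SS_odd[of k b] by simp
  next
    case 4 thus ?thesis using C(4)[of k] k SS_even[of k b] by simp
  qed
qed

lemma cond_a: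
  assumes cc: "coeff_conds l a b" and l: "l \<ge> 4" and k: "k \<in> {1..l-1}"
  shows "(-1)^(k+1) * a k < 5 - 2 * real l - (SS a k)^2/2"
proof -
  have C: "a 1 < 5 - 2 * real l" "a 2 > 2 * real l - 5"
    "\<And>j. odd j \<and> 3 \<le> j \<and> j \<le> l - 1 \<Longrightarrow> a j < 5 - 2 * real l - (1/2) * (\<Sum>m=1..(j-1) div 2. \<bar>a (2*m-1)\<bar>)^2"
    "\<And>j. even j \<and> 4 \<le> j \<and> j \<le> l - 1 \<Longrightarrow> a j > 2 * real l - 5 + (1/2) * (\<Sum>m=1..j div 2 - 1. \<bar>a (2*m)\<bar>)^2"
    using cc l unfolding coeff_conds_def by auto
  have "k = 1 \<or> k = 2 \<or> (odd k \<and> k \<ge> 3) \<or> (even k \<and> k \<ge> 4)"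
  proof -
    have k1: "k \<ge> 1" using k by simp
    show ?thesis
    proof (cases "k \<le> 2")
      case True thus ?thesis using k1 by linarith
    next
      case False
      moreover have "k \<noteq> 3 \<or> odd k" by auto
      ultimately show ?thesis by (cases "odd k") auto
    qed
  qed
  then consider "k = 1" | "k = 2" | "odd k" "k \<ge> 3" | "even k" "k \<ge> 4" by blast
  thus ?thesis
  proof cases
    case 1 thus ?thesis using C SS_small by simp
  next
    case 2 thus ?thesis using C SS_small by simp
  next
    case 3 thus ?thesis using C(3)[of k] k SS_odd[of k a] by simp
  next
    case 4 thus ?thesis using C(4)[of k] k SS_even[of k a] by simp
  qed
qed




lemma sign_shift: "i \<le> l \<Longrightarrow> ((-1::real)^(l+1+i)) = (-1)^(l-i+1)"
proof -
  assume "i \<le> l"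
  hence e: "l+1+i = (l-i+1) + 2*i" by simp
  have "((-1::real)^(l+1+i)) = (-1)^(l-i+1) * ((-1)^2)^i"
    unfolding e by (simp only: power_add power_mult)
  thus ?thesis by simp
qed

lemma linx: "(t::real) > L - 2 + s/2 \<Longrightarrow> i \<le> L - 1 \<Longrightarrow> 4 \<le> L \<Longrightarrow> 0 < t - 1/2 - ((i - 1)/2 + (L - i)/4) - s/2"
  by (simp add: field_simps)
lemma liny: "(t::real) < 5 - 2*L - s/2 \<Longrightarrow> i \<le> L - 1 \<Longrightarrow> 4 \<le> L \<Longrightarrow> 0 < 1/2 - t - ((i - 1)/2 + (L - i)/4) - L/2 - s/2"
  by (simp add: field_simps)

lemma core4:
  assumes l: "l \<ge> 4" and cc: "coeff_conds l a b"
  shows "\<exists>M>0. \<forall>X Y. X 0 = 0 \<and> X l = 0 \<and> (\<forall>k\<in>{1..l-1}. X (l+k) = b k * X (l-k)) \<and>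
      Y 0 = 0 \<and> (\<forall>k\<in>{1..l-1}. Y (l+k) = a k * Y (l-k)) \<longrightarrow>
      QF l X - QF l Y \<ge> M * ((\<Sum>i\<in>{1..<l}. X i ^ 2 + Y i ^ 2) + Y l ^ 2)"
proof -
  define w where "w i = (real i - 1)/2 + (real l - real i)/4" for i
  define ex where "ex i = (-1)^(l+1+i) * b (l-i) - 1/2 - w i - (SS b (l-i))^2/2" for i
  define ey where "ey i = 1/2 - (-1)^(l+1+i) * a (l-i) - w i - real l/2 - (SS a (l-i))^2/2" for i
  have exp: "ex i > 0" if i: "i \<in> {1..<l}" for i
  proof -
    have k: "l - i \<in> {1..l-1}" using i by auto
    have "(-1)^(l+1+i) * b (l-i) > real l - 2 + (SS b (l-i))^2/2"
      using cond_b[OF cc l k] sign_shift[of i l] i by simp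
    moreover have "real i \<le> real l - 1" using i by auto
    moreover have "real l \<ge> 4" using l by simp
    ultimately show ?thesis unfolding ex_def w_def by (rule linx)
  qed
  have eyp: "ey i > 0" if i: "i \<in> {1..<l}" for i
  proof -
    have k: "l - i \<in> {1..l-1}" using i by auto
    have "(-1)^(l+1+i) * a (l-i) < 5 - 2 * real l - (SS a (l-i))^2/2"
      using cond_a[OF cc l k] sign_shift[of i l] i by simp
    moreover have "real i \<le> real l - 1" using i by auto
    moreover have "real l \<ge> 4" using l by simp
    ultimately show ?thesis unfolding ey_def w_def by (rule liny)
  qed
  define S where "S = insert (1/4) (ex ` {1..<l} \<union> ey ` {1..<l})"
  define M where "M = Min S"
  have finS: "finite S" "S \<noteq> {}" unfolding S_def by auto
  have Mpos: "M > 0" unfolding M_def using finS exp eyp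
    by (subst Min_gr_iff) (auto simp: S_def)
  have Mex: "M \<le> ex i" "M \<le> ey i" if "i \<in> {1..<l}" for i
  proof -
    have "ex i \<in> S" "ey i \<in> S" unfolding S_def using that by blast+
    thus "M \<le> ex i" "M \<le> ey i" unfolding M_def using Min_le[OF finS(1)] by blast+
  qed
  have M4: "M \<le> 1/4"
  proof -
    have "1/4 \<in> S" unfolding S_def by blast
    thus ?thesis unfolding M_def using Min_le[OF finS(1)] by blast
  qed
  show ?thesis
  proof (intro exI[of _ M] conjI allI impI Mpos)
    fix X Y :: "nat \<Rightarrow> real"
    assume H: "X 0 = 0 \<and> X l = 0 \<and> (\<forall>k\<in>{1..l-1}. X (l+k) = b k * X (l-k)) \<and>
      Y 0 = 0 \<and> (\<forall>k\<in>{1..l-1}. Y (l+k) = a k * Y (l-k))"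
    have l1: "l \<ge> 1" "l \<ge> 2" using l by auto
    have QX: "QF l X = (\<Sum>i\<in>{1..<l}. ((-1)^(l+1+i) * b (l-i) - 1/2) * X i ^ 2) - X l ^ 2 / 2 + CC l X"
      by (rule QF_split[OF l1(1)]) (use H in auto)
    have QY: "QF l Y = (\<Sum>i\<in>{1..<l}. ((-1)^(l+1+i) * a (l-i) - 1/2) * Y i ^ 2) - Y l ^ 2 / 2 + CC l Y"
      by (rule QF_split[OF l1(1)]) (use H in auto)
    have CX: "\<bar>CC l X\<bar> \<le> (\<Sum>i\<in>{1..<l}. ((real i - 1)/2 + (real l - real i)/4 + 0*real l/2 + (SS b (l-i))^2/2) * X i^2) + X l^2/4"
      by (rule CC_bound[OF l1(2)]) (use H in auto)
    have CY: "\<bar>CC l Y\<bar> \<le> (\<Sum>i\<in>{1..<l}. ((real i - 1)/2 + (real l - real i)/4 + 1*real l/2 + (SS a (l-i))^2/2) * Y i^2) + Y l^2/4"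
      by (rule CC_bound[OF l1(2)]) (use H in auto)
    have "QF l X \<ge> (\<Sum>i\<in>{1..<l}. ex i * X i ^ 2)"
    proof -
      have "(\<Sum>i\<in>{1..<l}. ex i * X i ^ 2) = (\<Sum>i\<in>{1..<l}. ((-1)^(l+1+i) * b (l-i) - 1/2) * X i ^ 2)
         - (\<Sum>i\<in>{1..<l}. ((real i - 1)/2 + (real l - real i)/4 + 0*real l/2 + (SS b (l-i))^2/2) * X i^2)"
        unfolding ex_def w_def sum_subtractf[symmetric] by (rule sum.cong) (auto simp: algebra_simps)
      moreover have "X l ^ 2 = 0" using H by simp
      ultimately show ?thesis using QX CX by linarith
    qed
    moreover have "QF l Y \<le> - (\<Sum>i\<in>{1..<l}. ey i * Y i ^ 2) - Y l ^ 2 / 4"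
    proof -
      have "(\<Sum>i\<in>{1..<l}. ey i * Y i ^ 2) = - (\<Sum>i\<in>{1..<l}. ((-1)^(l+1+i) * a (l-i) - 1/2) * Y i ^ 2)
         - (\<Sum>i\<in>{1..<l}. ((real i - 1)/2 + (real l - real i)/4 + 1*real l/2 + (SS a (l-i))^2/2) * Y i^2)"
        unfolding ey_def w_def sum_subtractf[symmetric] sum_negf[symmetric] by (rule sum.cong) (auto simp: algebra_simps)
      thus ?thesis using QY CY by linarith
    qed
    moreover have "(\<Sum>i\<in>{1..<l}. ex i * X i ^ 2) \<ge> (\<Sum>i\<in>{1..<l}. M * X i ^ 2)"
      by (intro sum_mono mult_right_mono Mex) auto
    moreover have "(\<Sum>i\<in>{1..<l}. ey i * Y i ^ 2) \<ge> (\<Sum>i\<in>{1..<l}. M * Y i ^ 2)"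
      by (intro sum_mono mult_right_mono Mex) auto
    moreover have "Y l ^ 2 / 4 \<ge> M * Y l ^ 2" using mult_right_mono[OF M4, of "Y l ^ 2"] by simp
    moreover have "M * ((\<Sum>i\<in>{1..<l}. X i ^ 2 + Y i ^ 2) + Y l ^ 2)
        = (\<Sum>i\<in>{1..<l}. M * X i ^ 2) + (\<Sum>i\<in>{1..<l}. M * Y i ^ 2) + M * Y l ^ 2"
      by (simp add: sum_distrib_left sum.distrib algebra_simps)
    ultimately show "QF l X - QF l Y \<ge> M * ((\<Sum>i\<in>{1..<l}. X i ^ 2 + Y i ^ 2) + Y l ^ 2)"
      by linarith
  qed
qed




lemma core2:
  assumes cc: "coeff_conds 2 a b"
  shows "\<exists>M>0. \<forall>X Y. X 0 = 0 \<and> X 2 = 0 \<and> (\<forall>k\<in>{1..2-1}. X (2+k) = b k * X (2-k)) \<and>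
      Y 0 = 0 \<and> (\<forall>k\<in>{1..2-1}. Y (2+k) = a k * Y (2-k)) \<longrightarrow>
      QF 2 X - QF 2 Y \<ge> M * ((\<Sum>i\<in>{1..<2}. X i ^ 2 + Y i ^ 2) + Y 2 ^ 2)"
proof -
  have c: "b 1 > 1/2" "a 1 < 1/2" using cc unfolding coeff_conds_def by auto
  define M where "M = min (b 1 - 1/2) (min (1/2 - a 1) (1/2))"
  have M: "M > 0" "M \<le> b 1 - 1/2" "M \<le> 1/2 - a 1" "M \<le> 1/2" using c unfolding M_def by (auto simp: min_def)
  show ?thesis
  proof (intro exI[of _ M] conjI allI impI M(1))
    fix X Y :: "nat \<Rightarrow> real"
    assume H: "X 0 = 0 \<and> X 2 = 0 \<and> (\<forall>k\<in>{1..2-1}. X (2+k) = b k * X (2-k)) \<and>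
      Y 0 = 0 \<and> (\<forall>k\<in>{1..2-1}. Y (2+k) = a k * Y (2-k))"
    have QX: "QF 2 X = (\<Sum>i\<in>{1..<2}. ((-1)^(2+1+i) * b (2-i) - 1/2) * X i ^ 2) - X 2 ^ 2 / 2 + CC 2 X"
      by (rule QF_split) (use H in auto)
    have QY: "QF 2 Y = (\<Sum>i\<in>{1..<2}. ((-1)^(2+1+i) * a (2-i) - 1/2) * Y i ^ 2) - Y 2 ^ 2 / 2 + CC 2 Y"
      by (rule QF_split) (use H in auto)
    have s: "{1..<2::nat} = {1}" by auto
    have cc0: "CC 2 Z = 0" for Z unfolding CC_def s by simp
    have "QF 2 X - QF 2 Y = (b 1 - 1/2) * X 1 ^ 2 + (1/2 - a 1) * Y 1 ^ 2 + 1/2 * Y 2 ^ 2"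
      unfolding QX QY cc0 s using H by (simp add: algebra_simps)
    moreover have "(b 1 - 1/2) * X 1 ^ 2 \<ge> M * X 1 ^ 2" using mult_right_mono[OF M(2), of "X 1 ^ 2"] by simp
    moreover have "(1/2 - a 1) * Y 1 ^ 2 \<ge> M * Y 1 ^ 2" using mult_right_mono[OF M(3), of "Y 1 ^ 2"] by simp
    moreover have "1/2 * Y 2 ^ 2 \<ge> M * Y 2 ^ 2" using mult_right_mono[OF M(4), of "Y 2 ^ 2"] by simp
    ultimately show "QF 2 X - QF 2 Y \<ge> M * ((\<Sum>i\<in>{1..<2}. X i ^ 2 + Y i ^ 2) + Y 2 ^ 2)"
      unfolding s by (simp add: algebra_simps)
  qed
qed

lemma core3:
  assumes cc: "coeff_conds 3 a b"
  shows "\<exists>M>0. \<forall>X Y. X 0 = 0 \<and> X 3 = 0 \<and> (\<forall>k\<in>{1..3-1}. X (3+k) = b k * X (3-k)) \<and>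
      Y 0 = 0 \<and> (\<forall>k\<in>{1..3-1}. Y (3+k) = a k * Y (3-k)) \<longrightarrow>
      QF 3 X - QF 3 Y \<ge> M * ((\<Sum>i\<in>{1..<3}. X i ^ 2 + Y i ^ 2) + Y 3 ^ 2)"
proof -
  have c: "b 2 < -1/2" "b 1 > 1/2" "a 2 > 1/2" "a 1 < 1/2" using cc unfolding coeff_conds_def by auto
  define M where "M = min (- b 2 - 1/2) (min (b 1 - 1/2) (min (a 2 - 1/2) (min (1/2 - a 1) (1/4))))"
  have M: "M > 0" "M \<le> - b 2 - 1/2" "M \<le> b 1 - 1/2" "M \<le> a 2 - 1/2" "M \<le> 1/2 - a 1" "M \<le> 1/4"
    using c unfolding M_def by (auto simp: min_def)
  show ?thesis
  proof (intro exI[of _ M] conjI allI impI M(1))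
    fix X Y :: "nat \<Rightarrow> real"
    assume H: "X 0 = 0 \<and> X 3 = 0 \<and> (\<forall>k\<in>{1..3-1}. X (3+k) = b k * X (3-k)) \<and>
      Y 0 = 0 \<and> (\<forall>k\<in>{1..3-1}. Y (3+k) = a k * Y (3-k))"
    have QX: "QF 3 X = (\<Sum>i\<in>{1..<3}. ((-1)^(3+1+i) * b (3-i) - 1/2) * X i ^ 2) - X 3 ^ 2 / 2 + CC 3 X"
      by (rule QF_split) (use H in auto)
    have QY: "QF 3 Y = (\<Sum>i\<in>{1..<3}. ((-1)^(3+1+i) * a (3-i) - 1/2) * Y i ^ 2) - Y 3 ^ 2 / 2 + CC 3 Y"
      by (rule QF_split) (use H in auto)
    have s: "{1..<3::nat} = {1,2}" by auto
    have cc0: "CC 3 Z = Z 3 * Z 1" for Z unfolding CC_def s by simp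
    have "QF 3 X - QF 3 Y = (- b 2 - 1/2) * X 1 ^ 2 + (b 1 - 1/2) * X 2 ^ 2 + (a 2 + 1/2) * Y 1 ^ 2
        + (1/2 - a 1) * Y 2 ^ 2 + 1/2 * Y 3 ^ 2 - Y 3 * Y 1"
      unfolding QX QY cc0 s using H by (simp add: algebra_simps)
    moreover have "Y 3 * Y 1 \<le> Y 1 ^ 2 + Y 3 ^ 2 / 4"
    proof -
      have "0 \<le> (Y 1 - Y 3 / 2)^2" by simp
      thus ?thesis by (simp add: power2_eq_square algebra_simps)
    qed
    moreover have "(- b 2 - 1/2) * X 1 ^ 2 \<ge> M * X 1 ^ 2" using mult_right_mono[OF M(2), of "X 1 ^ 2"] by simp
    moreover have "(b 1 - 1/2) * X 2 ^ 2 \<ge> M * X 2 ^ 2" using mult_right_mono[OF M(3), of "X 2 ^ 2"] by simp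
    moreover have "(a 2 - 1/2) * Y 1 ^ 2 \<ge> M * Y 1 ^ 2" using mult_right_mono[OF M(4), of "Y 1 ^ 2"] by simp
    moreover have "(1/2 - a 1) * Y 2 ^ 2 \<ge> M * Y 2 ^ 2" using mult_right_mono[OF M(5), of "Y 2 ^ 2"] by simp
    moreover have "1/4 * Y 3 ^ 2 \<ge> M * Y 3 ^ 2" using mult_right_mono[OF M(6), of "Y 3 ^ 2"] by simp
    ultimately show "QF 3 X - QF 3 Y \<ge> M * ((\<Sum>i\<in>{1..<3}. X i ^ 2 + Y i ^ 2) + Y 3 ^ 2)"
      unfolding s by (simp add: algebra_simps)
  qed
qed




theorem mainTheorem5:
  fixes l :: nat and a b :: "nat \<Rightarrow> real"
  assumes "l \<ge> 2" and "coeff_conds l a b"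
  shows "\<exists>M>0. \<forall>L>0. \<forall>D :: nat \<Rightarrow> real \<Rightarrow> real.
           Ck_family (2*l+1) L D \<and> boundary_conds l L a b D \<longrightarrow>
           (\<Sum>j=1..l. (-1)^(j+1) * integral {0..L} (\<lambda>x. D (2*j+1) x * D 0 x))
             \<ge> M * ((\<Sum>i=1..l-1. (D i L)^2 + (D i 0)^2) + (D l 0)^2)
           \<and> M * ((\<Sum>i=1..l-1. (D i L)^2 + (D i 0)^2) + (D l 0)^2) \<ge> 0"
proof -
  have core: "\<exists>M>0. \<forall>X Y. X 0 = 0 \<and> X l = 0 \<and> (\<forall>k\<in>{1..l-1}. X (l+k) = b k * X (l-k)) \<and>
      Y 0 = 0 \<and> (\<forall>k\<in>{1..l-1}. Y (l+k) = a k * Y (l-k)) \<longrightarrow>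
      QF l X - QF l Y \<ge> M * ((\<Sum>i\<in>{1..<l}. X i ^ 2 + Y i ^ 2) + Y l ^ 2)"
  proof -
    consider "l = 2" | "l = 3" | "l \<ge> 4" using assms(1) by linarith
    thus ?thesis
    proof cases
      case 1
      have "coeff_conds 2 a b" using assms(2) 1 by simp
      from core2[OF this] show ?thesis unfolding 1 .
    next
      case 2
      have "coeff_conds 3 a b" using assms(2) 2 by simp
      from core3[OF this] show ?thesis unfolding 2 .
    next
      case 3
      show ?thesis by (rule core4[OF 3 assms(2)])
    qed
  qed
  then obtain M where M: "M > 0" and H: "\<And>X Y. X 0 = 0 \<and> X l = 0 \<and> (\<forall>k\<in>{1..l-1}. X (l+k) = b k * X (l-k)) \<and>
      Y 0 = 0 \<and> (\<forall>k\<in>{1..l-1}. Y (l+k) = a k * Y (l-k)) \<Longrightarrow>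
      QF l X - QF l Y \<ge> M * ((\<Sum>i\<in>{1..<l}. X i ^ 2 + Y i ^ 2) + Y l ^ 2)"
    by blast
  have set: "{1..l-1} = {1..<l}" using assms(1) by auto
  show ?thesis
  proof (intro exI[of _ M] conjI allI impI M)
    fix L :: real and D :: "nat \<Rightarrow> real \<Rightarrow> real"
    assume L: "L > 0" and H2: "Ck_family (2*l+1) L D \<and> boundary_conds l L a b D"
    have bc: "D 0 0 = 0" "D 0 L = 0" "D l L = 0"
      "\<forall>j\<in>{1..l-1}. D (l+j) 0 = a j * D (l-j) 0 \<and> D (l+j) L = b j * D (l-j) L"
      using H2 unfolding boundary_conds_def by auto
    have e: "(\<Sum>j=1..l. (-1)^(j+1) * integral {0..L} (\<lambda>x. D (2*j+1) x * D 0 x))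
       = QF l (\<lambda>p. D p L) - QF l (\<lambda>p. D p 0)"
      by (rule lhs_QF) (use H2 L in auto)
    have "QF l (\<lambda>p. D p L) - QF l (\<lambda>p. D p 0) \<ge> M * ((\<Sum>i\<in>{1..<l}. (D i L) ^ 2 + (D i 0) ^ 2) + (D l 0) ^ 2)"
      by (rule H) (use bc in auto)
    thus "(\<Sum>j=1..l. (-1)^(j+1) * integral {0..L} (\<lambda>x. D (2*j+1) x * D 0 x))
             \<ge> M * ((\<Sum>i=1..l-1. (D i L)^2 + (D i 0)^2) + (D l 0)^2)"
      unfolding e set .
    show "M * ((\<Sum>i=1..l-1. (D i L)^2 + (D i 0)^2) + (D l 0)^2) \<ge> 0"
      using M by (intro mult_nonneg_nonneg add_nonneg_nonneg sum_nonneg) auto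
  qed
qed


end
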